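(* Let $M^2$ be a surface in $\mathbb E^4$ all of whose points are flat ($k=\varkappa=0$ everywhere) and whose second fundamental form $\sigma$ vanishes at no point. Then at every point the vectors $\sigma(X,Y)$, $X,Y\in T_pM^2$, span a line in the normal space; let $b$ be a unit normal vector field spanning this line and $l$ a unit normal vector field orthogonal to $b$. For an orthonormal tangent frame $\{x,y\}$ put $\beta_1=g(\nabla'_xb,l)$, $\beta_2=g(\nabla'_yb,l)$ and $\beta=\beta_1^2+\beta_2^2$ (which does not depend on the choice of orthonormal tangent frame). Then at each point of $M^2$ either the Gauss curvature $K$ vanishes or $\beta$ vanishes.
   Context: $\mathbb E^4$ carries the standard metric $g$ and flat Levi-Civita connection $\nabla'$. For a surface $M^2$ parametrized by $z(u,v)$, with $E=g(z_u,z_u)$, $F=g(z_u,z_v)$, $G=g(z_v,z_v)$, $W=\sqrt{EG-F^2}$, second fundamental form $\sigma$, and an orthonormal normal frame $\{e_1,e_2\}$, write $\sigma(z_u,z_u)=c_{11}^1e_1+c_{11}^2e_2$, $\sigma(z_u,z_v)=c_{12}^1e_1+c_{12}^2e_2$, $\sigma(z_v,z_v)=c_{22}^1e_1+c_{22}^2e_2$; put $\Delta_1=c_{11}^1c_{12}^2-c_{11}^2c_{12}^1$, $\Delta_2=c_{11}^1c_{22}^2-c_{11}^2c_{22}^1$, $\Delta_3=c_{12}^1c_{22}^2-c_{12}^2c_{22}^1$, $L=2\Delta_1/W$, $M=\Delta_2/W$, $N=2\Delta_3/W$, and $k=\frac{LN-M^2}{EG-F^2}$, $\varkappa=\frac{EN+GL-2FM}{2(EG-F^2)}$.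 A point is flat if $k=\varkappa=0$ there (equivalently $L=M=N=0$). *)

theory Defs
  imports "HOL-Analysis.Analysis"
begin

type_synonym param = "real \<times> real"
type_synonym E4 = "real^4"

definition Du :: "(param \<Rightarrow> 'a::real_normed_vector) \<Rightarrow> param \<Rightarrow> 'a" where
  "Du f p = frechet_derivative f (at p) (1, 0)"
definition Dv :: "(param \<Rightarrow> 'a::real_normed_vector) \<Rightarrow> param \<Rightarrow> 'a" where
  "Dv f p = frechet_derivative f (at p) (0, 1)"

fun Ck :: "nat \<Rightarrow> param set \<Rightarrow> (param \<Rightarrow> 'a::real_normed_vector) \<Rightarrow> bool" where
  "Ck 0 U f = continuous_on U f"
| "Ck (Suc k) U f = (f differentiable_on U \<and> Ck k U (Du f) \<and> Ck k U (Dv f))"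

definition smooth_on :: "param set \<Rightarrow> (param \<Rightarrow> 'a::real_normed_vector) \<Rightarrow> bool" where
  "smooth_on U f = (\<forall>k. Ck k U f)"

definition regular_at :: "(param \<Rightarrow> E4) \<Rightarrow> param \<Rightarrow> bool" where
  "regular_at z p = (\<forall>a c. a *\<^sub>R Du z p + c *\<^sub>R Dv z p = 0 \<longrightarrow> a = 0 \<and> c = 0)"

definition coefE :: "(param \<Rightarrow> E4) \<Rightarrow> param \<Rightarrow> real" where
  "coefE z p = Du z p \<bullet> Du z p"
definition coefF :: "(param \<Rightarrow> E4) \<Rightarrow> param \<Rightarrow> real" where
  "coefF z p = Du z p \<bullet> Dv z p"
definition coefG :: "(param \<Rightarrow> E4) \<Rightarrow> param \<Rightarrow> real" where
  "coefG z p = Dv z p \<bullet> Dv z p"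
definition coefW :: "(param \<Rightarrow> E4) \<Rightarrow> param \<Rightarrow> real" where
  "coefW z p = sqrt (coefE z p * coefG z p - (coefF z p)^2)"

text \<open>Normal component of a vector w w.r.t. the tangent plane span{z_u, z_v}
  (w minus its orthogonal projection onto the tangent plane).\<close>
definition normal_part :: "(param \<Rightarrow> E4) \<Rightarrow> param \<Rightarrow> E4 \<Rightarrow> E4" where
  "normal_part z p w =
     (let E = coefE z p; F = coefF z p; G = coefG z p; d = E * G - F^2;
          a = (G * (w \<bullet> Du z p) - F * (w \<bullet> Dv z p)) / d;
          c = (E * (w \<bullet> Dv z p) - F * (w \<bullet> Du z p)) / d
      in w - (a *\<^sub>R Du z p + c *\<^sub>R Dv z p))"

definition sigma11 :: "(param \<Rightarrow> E4) \<Rightarrow> param \<Rightarrow> E4" where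
  "sigma11 z p = normal_part z p (Du (Du z) p)"
definition sigma12 :: "(param \<Rightarrow> E4) \<Rightarrow> param \<Rightarrow> E4" where
  "sigma12 z p = normal_part z p (Dv (Du z) p)"
definition sigma22 :: "(param \<Rightarrow> E4) \<Rightarrow> param \<Rightarrow> E4" where
  "sigma22 z p = normal_part z p (Dv (Dv z) p)"

definition is_normal :: "(param \<Rightarrow> E4) \<Rightarrow> param \<Rightarrow> E4 \<Rightarrow> bool" where
  "is_normal z p n = (n \<bullet> Du z p = 0 \<and> n \<bullet> Dv z p = 0)"

definition orthonormal_normal_frame :: "(param \<Rightarrow> E4) \<Rightarrow> param \<Rightarrow> E4 \<Rightarrow> E4 \<Rightarrow> bool" where
  "orthonormal_normal_frame z p e1 e2 =
     (is_normal z p e1 \<and> is_normal z p e2 \<and> e1 \<bullet> e1 = 1 \<and> e2 \<bullet> e2 = 1 \<and> e1 \<bullet> e2 = 0)"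

definition invL :: "(param \<Rightarrow> E4) \<Rightarrow> param \<Rightarrow> E4 \<Rightarrow> E4 \<Rightarrow> real" where
  "invL z p e1 e2 =
     2 * ((sigma11 z p \<bullet> e1) * (sigma12 z p \<bullet> e2) - (sigma11 z p \<bullet> e2) * (sigma12 z p \<bullet> e1))
       / coefW z p"
definition invM :: "(param \<Rightarrow> E4) \<Rightarrow> param \<Rightarrow> E4 \<Rightarrow> E4 \<Rightarrow> real" where
  "invM z p e1 e2 =
     ((sigma11 z p \<bullet> e1) * (sigma22 z p \<bullet> e2) - (sigma11 z p \<bullet> e2) * (sigma22 z p \<bullet> e1))
       / coefW z p"
definition invN :: "(param \<Rightarrow> E4) \<Rightarrow> param \<Rightarrow> E4 \<Rightarrow> E4 \<Rightarrow> real" where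
  "invN z p e1 e2 =
     2 * ((sigma12 z p \<bullet> e1) * (sigma22 z p \<bullet> e2) - (sigma12 z p \<bullet> e2) * (sigma22 z p \<bullet> e1))
       / coefW z p"

definition inv_k :: "(param \<Rightarrow> E4) \<Rightarrow> param \<Rightarrow> E4 \<Rightarrow> E4 \<Rightarrow> real" where
  "inv_k z p e1 e2 =
     (invL z p e1 e2 * invN z p e1 e2 - (invM z p e1 e2)^2)
       / (coefE z p * coefG z p - (coefF z p)^2)"
definition inv_kappa :: "(param \<Rightarrow> E4) \<Rightarrow> param \<Rightarrow> E4 \<Rightarrow> E4 \<Rightarrow> real" where
  "inv_kappa z p e1 e2 =
     (coefE z p * invN z p e1 e2 + coefG z p * invL z p e1 e2 - 2 * coefF z p * invM z p e1 e2)
       / (2 * (coefE z p * coefG z p - (coefF z p)^2))"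

text \<open>Flat point: k = kappa = 0 (computed with an orthonormal normal frame;
  the vanishing does not depend on the frame, we require it for every frame).\<close>
definition flat_point :: "(param \<Rightarrow> E4) \<Rightarrow> param \<Rightarrow> bool" where
  "flat_point z p = (\<forall>e1 e2. orthonormal_normal_frame z p e1 e2 \<longrightarrow>
                        inv_k z p e1 e2 = 0 \<and> inv_kappa z p e1 e2 = 0)"

text \<open>Gauss curvature via the Gauss equation:
  K = (<sigma(z_u,z_u), sigma(z_v,z_v)> - |sigma(z_u,z_v)|^2) / (EG - F^2).\<close>
definition gauss_K :: "(param \<Rightarrow> E4) \<Rightarrow> param \<Rightarrow> real" where
  "gauss_K z p =
     (sigma11 z p \<bullet> sigma22 z p - sigma12 z p \<bullet> sigma12 z p)
       / (coefE z p * coefG z p - (coefF z p)^2)"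

text \<open>Directional derivative (flat connection) of a vector field n along the tangent
  vector a1 z_u + a2 z_v.\<close>
definition nabla' :: "(param \<Rightarrow> E4) \<Rightarrow> param \<Rightarrow> real \<Rightarrow> real \<Rightarrow> E4" where
  "nabla' n p a1 a2 = a1 *\<^sub>R Du n p + a2 *\<^sub>R Dv n p"

end

theory Submission
  imports Defs
begin


definition m3 :: "real^4 \<Rightarrow> real^4 \<Rightarrow> real^4 \<Rightarrow> 4 \<Rightarrow> 4 \<Rightarrow> 4 \<Rightarrow> real" where
  "m3 b c d j k l = b$j*(c$k*d$l - c$l*d$k) - b$k*(c$j*d$l - c$l*d$j) + b$l*(c$j*d$k - c$k*d$j)"

definition det4 :: "real^4 \<Rightarrow> real^4 \<Rightarrow> real^4 \<Rightarrow> real^4 \<Rightarrow> real" where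
  "det4 a b c d = a$1 * m3 b c d 2 3 4 - a$2 * m3 b c d 1 3 4 + a$3 * m3 b c d 1 2 4 - a$4 * m3 b c d 1 2 3"

lemma det4_add1: "det4 (x + y) b c d = det4 x b c d + det4 y b c d"
  by (simp add: det4_def m3_def algebra_simps)
lemma det4_add2: "det4 a (x + y) c d = det4 a x c d + det4 a y c d"
  by (simp add: det4_def m3_def algebra_simps)
lemma det4_add3: "det4 a b (x + y) d = det4 a b x d + det4 a b y d"
  by (simp add: det4_def m3_def algebra_simps)
lemma det4_add4: "det4 a b c (x + y) = det4 a b c x + det4 a b c y"
  by (simp add: det4_def m3_def algebra_simps)
lemma det4_scale1: "det4 (r *\<^sub>R x) b c d = r * det4 x b c d"
  by (simp add: det4_def m3_def algebra_simps)
lemma det4_scale2: "det4 a (r *\<^sub>R x) c d = r * det4 a x c d"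
  by (simp add: det4_def m3_def algebra_simps)
lemma det4_scale3: "det4 a b (r *\<^sub>R x) d = r * det4 a b x d"
  by (simp add: det4_def m3_def algebra_simps)
lemma det4_scale4: "det4 a b c (r *\<^sub>R x) = r * det4 a b c x"
  by (simp add: det4_def m3_def algebra_simps)
lemma det4_alt:
  "det4 a a c d = 0" "det4 a b a d = 0" "det4 a b c a = 0"
  "det4 a b b d = 0" "det4 a b c b = 0" "det4 a b c c = 0"
  by (simp_all add: det4_def m3_def algebra_simps)
lemma det4_swap34: "det4 a b c d = - det4 a b d c"
  by (simp add: det4_def m3_def algebra_simps)

lemma det4_has_derivative:
  assumes "(fa has_derivative fa') (at p)" "(fb has_derivative fb') (at p)"
    "(fc has_derivative fc') (at p)" "(fd has_derivative fd') (at p)"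
  shows "((\<lambda>q. det4 (fa q) (fb q) (fc q) (fd q)) has_derivative
     (\<lambda>w. det4 (fa' w) (fb p) (fc p) (fd p) + det4 (fa p) (fb' w) (fc p) (fd p)
        + det4 (fa p) (fb p) (fc' w) (fd p) + det4 (fa p) (fb p) (fc p) (fd' w))) (at p)"
proof -
  have c: "\<And>f f' i. (f has_derivative f') (at p) \<Longrightarrow> ((\<lambda>q. f q $ i) has_derivative (\<lambda>w. f' w $ i)) (at p)"
    by (rule bounded_linear.has_derivative[OF bounded_linear_vec_nth])
  note d = c[OF assms(1)] c[OF assms(2)] c[OF assms(3)] c[OF assms(4)]
  show ?thesis
    unfolding det4_def m3_def
    apply (rule has_derivative_eq_rhs)
      apply (rule has_derivative_add has_derivative_diff has_derivative_mult d)+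
    apply (rule ext)
    apply (simp add: algebra_simps)
    done
qed

lemma gram: "let N = (\<chi> i::4. if i = 1 then m3 a b c 2 3 4 else if i = 2 then - m3 a b c 1 3 4 else if i = 3 then m3 a b c 1 2 4 else - m3 a b c 1 2 3) in
   N \<bullet> N = (a\<bullet>a)*((b\<bullet>b)*(c\<bullet>c) - (b\<bullet>c)^2) - (a\<bullet>b)*((a\<bullet>b)*(c\<bullet>c) - (b\<bullet>c)*(a\<bullet>c)) + (a\<bullet>c)*((a\<bullet>b)*(b\<bullet>c)-(b\<bullet>b)*(a\<bullet>c))"
  unfolding Let_def inner_vec_def sum_4 m3_def power2_eq_square by simp algebra



lemma mixed_est:
  fixes f :: "real\<times>real \<Rightarrow> 'a::real_inner"
  assumes fd: "\<And>q. q \<in> ball p r \<Longrightarrow> f differentiable (at q)"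
   and A: "bounded_linear A"
   and ne: "norm e \<le> 1" "norm k \<le> 1"
   and dd: "\<forall>y. norm (y - p) < d \<longrightarrow> norm (frechet_derivative f (at y) e - frechet_derivative f (at p) e - A (y - p)) \<le> \<epsilon> * norm (y - p)"
   and h: "0 < h" "2*h < d" "2*h < r" and eps: "\<epsilon> \<ge> 0"
  shows "norm (f (p + h*\<^sub>R e + h*\<^sub>R k) - f (p + h*\<^sub>R e) - f (p + h*\<^sub>R k) + f p - (h*h) *\<^sub>R A k) \<le> 3*\<epsilon>*h*h"
proof -
  define fe where "fe q = frechet_derivative f (at q) e" for q
  define G where "G s = f (p + s*\<^sub>R e + h*\<^sub>R k) - f (p + s*\<^sub>R e) - s *\<^sub>R (h *\<^sub>R A k)" for s
  have inb: "p + s*\<^sub>R e + t*\<^sub>R k \<in> ball p r" if "0 \<le> s" "s \<le> h" "0 \<le> t" "t \<le> h" for s t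
  proof -
    have "norm (s*\<^sub>R e + t*\<^sub>R k) \<le> norm (s*\<^sub>R e) + norm (t*\<^sub>R k)" by (rule norm_triangle_ineq)
    also have "\<dots> \<le> s + t" using that ne mult_left_le[of "norm e" s] mult_left_le[of "norm k" t] by simp
    finally have "norm (s*\<^sub>R e + t*\<^sub>R k) < r" using that h by simp
    then show ?thesis by (simp add: dist_norm norm_minus_commute add.assoc add.commute)
  qed
  have dline: "((\<lambda>s. f (p + s*\<^sub>R e + t*\<^sub>R k)) has_derivative (\<lambda>x. x *\<^sub>R fe (p + s*\<^sub>R e + t*\<^sub>R k))) (at s)"
    if "p + s*\<^sub>R e + t*\<^sub>R k \<in> ball p r" for s t
  proof -
    let ?q = "p + s*\<^sub>R e + t*\<^sub>R k"
    have f1: "(f has_derivative frechet_derivative f (at ?q)) (at ?q)"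
      using fd[OF that] frechet_derivative_works by blast
    have bl: "bounded_linear (frechet_derivative f (at ?q))" using f1 has_derivative_bounded_linear by blast
    have l1: "((\<lambda>s. p + s*\<^sub>R e + t*\<^sub>R k) has_derivative (\<lambda>x. x *\<^sub>R e)) (at s)"
      by (auto intro!: derivative_eq_intros)
    have "((f \<circ> (\<lambda>s. p + s*\<^sub>R e + t*\<^sub>R k)) has_derivative (frechet_derivative f (at ?q) \<circ> (\<lambda>x. x *\<^sub>R e))) (at s)"
      by (rule diff_chain_at[OF l1]) (use f1 in simp)
    moreover have "(frechet_derivative f (at ?q) \<circ> (\<lambda>x. x *\<^sub>R e)) = (\<lambda>x. x *\<^sub>R fe ?q)"
      using bl by (auto simp: fe_def o_def linear_cmul[OF bounded_linear.linear[OF bl]])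
    ultimately show ?thesis by (simp add: o_def)
  qed
  have dG: "(G has_derivative (\<lambda>x. x *\<^sub>R (fe (p + s*\<^sub>R e + h*\<^sub>R k) - fe (p + s*\<^sub>R e + 0*\<^sub>R k) - h *\<^sub>R A k))) (at s)"
    if "0 \<le> s" "s \<le> h" for s
  proof -
    have a: "((\<lambda>s. f (p + s*\<^sub>R e + h*\<^sub>R k)) has_derivative (\<lambda>x. x *\<^sub>R fe (p + s*\<^sub>R e + h*\<^sub>R k))) (at s)"
      using dline[OF inb[of s h]] that h by simp
    have b: "((\<lambda>s. f (p + s*\<^sub>R e + 0*\<^sub>R k)) has_derivative (\<lambda>x. x *\<^sub>R fe (p + s*\<^sub>R e + 0*\<^sub>R k))) (at s)"
      using dline[OF inb[of s 0]] that h by simp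
    have c: "((\<lambda>s. s *\<^sub>R (h *\<^sub>R A k)) has_derivative (\<lambda>x. x *\<^sub>R (h *\<^sub>R A k))) (at s)"
      by (auto intro!: derivative_eq_intros)
    have "(G has_derivative (\<lambda>x. x *\<^sub>R fe (p + s*\<^sub>R e + h*\<^sub>R k) - x *\<^sub>R fe (p + s*\<^sub>R e + 0*\<^sub>R k) - x *\<^sub>R (h *\<^sub>R A k))) (at s)"
      unfolding G_def using has_derivative_diff[OF has_derivative_diff[OF a b] c] by simp
    then show ?thesis by (simp add: algebra_simps)
  qed
  have cont: "continuous_on {0..h} G"
    by (rule has_derivative_continuous_on) (use dG in \<open>auto intro: has_derivative_at_withinI\<close>)
  obtain \<xi> where xi: "\<xi> \<in> {0<..<h}"
    and mv: "norm (G h - G 0) \<le> norm (h *\<^sub>R (fe (p + \<xi>*\<^sub>R e + h*\<^sub>R k) - fe (p + \<xi>*\<^sub>R e + 0*\<^sub>R k) - h *\<^sub>R A k))"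
    using mvt_general[OF h(1) cont, of "\<lambda>s x. x *\<^sub>R (fe (p + s*\<^sub>R e + h*\<^sub>R k) - fe (p + s*\<^sub>R e + 0*\<^sub>R k) - h *\<^sub>R A k)"] dG
    by force
  have est: "norm (fe (p + \<xi>*\<^sub>R e + t*\<^sub>R k) - fe p - A (\<xi>*\<^sub>R e + t*\<^sub>R k)) \<le> \<epsilon> * (\<xi> + t)"
    if "0 \<le> t" "t \<le> h" for t
  proof -
    have n: "norm (\<xi>*\<^sub>R e + t*\<^sub>R k) \<le> \<xi> + t"
    proof -
      have "norm (\<xi>*\<^sub>R e + t*\<^sub>R k) \<le> norm (\<xi>*\<^sub>R e) + norm (t*\<^sub>R k)" by (rule norm_triangle_ineq)
      also have "\<dots> \<le> \<xi> + t"
      proof -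
        have "\<xi>*norm e \<le> \<xi>" using ne xi by (intro mult_left_le) auto
        moreover have "t*norm k \<le> t" using ne that by (intro mult_left_le) auto
        moreover have "norm (\<xi>*\<^sub>R e) + norm (t*\<^sub>R k) = \<xi>*norm e + t*norm k" using xi that by simp
        ultimately show ?thesis by linarith
      qed
      finally show ?thesis .
    qed
    have "norm (\<xi>*\<^sub>R e + t*\<^sub>R k) < d" using n xi that h by auto
    then have "norm (fe (p + \<xi>*\<^sub>R e + t*\<^sub>R k) - fe p - A (\<xi>*\<^sub>R e + t*\<^sub>R k)) \<le> \<epsilon> * norm (\<xi>*\<^sub>R e + t*\<^sub>R k)"
      using dd[rule_format, of "p + \<xi>*\<^sub>R e + t*\<^sub>R k"] by (simp add: fe_def add.assoc)
    also have "\<dots> \<le> \<epsilon> * (\<xi> + t)" using n eps by (simp add: mult_left_mono)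
    finally show ?thesis .
  qed
  have "fe (p + \<xi>*\<^sub>R e + h*\<^sub>R k) - fe (p + \<xi>*\<^sub>R e + 0*\<^sub>R k) - h *\<^sub>R A k
      = (fe (p + \<xi>*\<^sub>R e + h*\<^sub>R k) - fe p - A (\<xi>*\<^sub>R e + h*\<^sub>R k)) - (fe (p + \<xi>*\<^sub>R e + 0*\<^sub>R k) - fe p - A (\<xi>*\<^sub>R e + 0*\<^sub>R k))"
    using A by (simp add: linear_add[OF bounded_linear.linear[OF A]] linear_cmul[OF bounded_linear.linear[OF A]] algebra_simps)
  then have "norm (fe (p + \<xi>*\<^sub>R e + h*\<^sub>R k) - fe (p + \<xi>*\<^sub>R e + 0*\<^sub>R k) - h *\<^sub>R A k)
      \<le> \<epsilon> * (\<xi> + h) + \<epsilon> * (\<xi> + 0)"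
    using est[of h] est[of 0] h norm_triangle_ineq4 order_trans add_mono by (smt (verit))
  also have "\<dots> \<le> 3 * \<epsilon> * h" using xi eps by (auto intro: mult_left_mono simp: algebra_simps)
  finally have n2: "norm (fe (p + \<xi>*\<^sub>R e + h*\<^sub>R k) - fe (p + \<xi>*\<^sub>R e + 0*\<^sub>R k) - h *\<^sub>R A k) \<le> 3 * \<epsilon> * h" .
  have "G h - G 0 = f (p + h*\<^sub>R e + h*\<^sub>R k) - f (p + h*\<^sub>R e) - f (p + h*\<^sub>R k) + f p - (h*h) *\<^sub>R A k"
    by (simp add: G_def algebra_simps)
  then have "norm (f (p + h*\<^sub>R e + h*\<^sub>R k) - f (p + h*\<^sub>R e) - f (p + h*\<^sub>R k) + f p - (h*h) *\<^sub>R A k)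
     \<le> h * norm (fe (p + \<xi>*\<^sub>R e + h*\<^sub>R k) - fe (p + \<xi>*\<^sub>R e + 0*\<^sub>R k) - h *\<^sub>R A k)"
    using mv h by simp
  also have "\<dots> \<le> h * (3 * \<epsilon> * h)" using n2 h by (simp add: mult_left_mono)
  finally show ?thesis by (simp add: algebra_simps)
qed

lemma schwarz:
  fixes f :: "real\<times>real \<Rightarrow> 'a::real_inner"
  assumes U: "open U" "p \<in> U" and fd: "\<And>q. q\<in>U \<Longrightarrow> f differentiable (at q)"
    and du: "Du f differentiable (at p)" and dv: "Dv f differentiable (at p)"
  shows "Dv (Du f) p = Du (Dv f) p"
proof -
  obtain A where A: "(Du f has_derivative A) (at p)" using du by (auto simp: differentiable_def)
  obtain B where B: "(Dv f has_derivative B) (at p)" using dv by (auto simp: differentiable_def)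
  have 1: "Dv (Du f) p = A (0,1)" using frechet_derivative_at[OF A] by (simp add: Dv_def)
  have 2: "Du (Dv f) p = B (1,0)" using frechet_derivative_at[OF B] by (simp add: Du_def)
  obtain r where r: "r > 0" "ball p r \<subseteq> U" using U open_contains_ball by blast
  have bA: "bounded_linear A" and bB: "bounded_linear B"
    using A B has_derivative_bounded_linear by blast+
  have key: "norm (A (0,1) - B (1,0)) \<le> 6 * \<epsilon>" if eps: "\<epsilon> > 0" for \<epsilon>
  proof -
    obtain dA where dA: "dA > 0" "\<forall>y. norm (y - p) < dA \<longrightarrow> norm (Du f y - Du f p - A (y - p)) \<le> \<epsilon> * norm (y - p)"
      using A eps unfolding has_derivative_at_alt by blast
    obtain dB where dB: "dB > 0" "\<forall>y. norm (y - p) < dB \<longrightarrow> norm (Dv f y - Dv f p - B (y - p)) \<le> \<epsilon> * norm (y - p)"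
      using B eps unfolding has_derivative_at_alt by blast
    define h where "h = min dA (min dB r) / 3"
    have h: "0 < h" "2*h < dA" "2*h < dB" "2*h < r" using dA dB r by (auto simp: h_def)
    have fdb: "\<And>q. q \<in> ball p r \<Longrightarrow> f differentiable (at q)" using fd r by blast
    have N1: "norm (f (p + h*\<^sub>R (1,0) + h*\<^sub>R (0,1)) - f (p + h*\<^sub>R (1,0)) - f (p + h*\<^sub>R (0,1)) + f p - (h*h) *\<^sub>R A (0,1)) \<le> 3*\<epsilon>*h*h"
      by (rule mixed_est[OF fdb bA _ _ _ h(1) h(2) h(4)]) (use dA eps in \<open>auto simp: Du_def\<close>)
    have N2: "norm (f (p + h*\<^sub>R (0,1) + h*\<^sub>R (1,0)) - f (p + h*\<^sub>R (0,1)) - f (p + h*\<^sub>R (1,0)) + f p - (h*h) *\<^sub>R B (1,0)) \<le> 3*\<epsilon>*h*h"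
      by (rule mixed_est[OF fdb bB _ _ _ h(1) h(3) h(4)]) (use dB eps in \<open>auto simp: Dv_def\<close>)
    define X where "X = f (p + h*\<^sub>R (1,0) + h*\<^sub>R (0,1)) - f (p + h*\<^sub>R (1,0)) - f (p + h*\<^sub>R (0,1)) + f p"
    have e2: "p + h*\<^sub>R (0,1) + h*\<^sub>R (1,0) = p + h*\<^sub>R (1,0) + h*\<^sub>R (0,1)" by (simp add: algebra_simps)
    have N1': "norm (X - (h*h) *\<^sub>R A (0,1)) \<le> 3*\<epsilon>*h*h" using N1 by (simp add: X_def)
    have N2': "norm (X - (h*h) *\<^sub>R B (1,0)) \<le> 3*\<epsilon>*h*h" using N2 unfolding e2 X_def by (simp add: algebra_simps)
    have "(h*h) * norm (A (0,1) - B (1,0)) = norm ((X - (h*h) *\<^sub>R B (1,0)) - (X - (h*h) *\<^sub>R A (0,1)))"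
      using h by (simp add: scaleR_diff_right[symmetric] abs_mult)
    also have "\<dots> \<le> norm (X - (h*h) *\<^sub>R B (1,0)) + norm (X - (h*h) *\<^sub>R A (0,1))" by (rule norm_triangle_ineq4)
    also have "\<dots> \<le> (h*h) * (6*\<epsilon>)" using N1' N2' by (simp add: algebra_simps)
    finally show ?thesis using h by (simp add: mult_le_cancel_left_pos)
  qed
  have "norm (A (0,1) - B (1,0)) = 0"
  proof (rule ccontr)
    assume "norm (A (0,1) - B (1,0)) \<noteq> 0"
    then have pos: "norm (A (0,1) - B (1,0)) > 0" by simp
    from key[of "norm (A (0,1) - B (1,0)) / 12"] pos show False by simp
  qed
  then show ?thesis using 1 2 by simp
qed



lemma span2_mem: "x \<in> span {a::real^4} \<longleftrightarrow> (\<exists>k. x = k *\<^sub>R a)"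
  by (auto simp: span_singleton)

lemma basis4:
  fixes U0 V0 B L :: "real^4"
  assumes reg: "\<forall>a c. a *\<^sub>R U0 + c *\<^sub>R V0 = 0 \<longrightarrow> a = 0 \<and> c = 0"
   and B: "B \<bullet> U0 = 0" "B \<bullet> V0 = 0" "B \<bullet> B = 1"
   and L: "L \<bullet> U0 = 0" "L \<bullet> V0 = 0" "L \<bullet> L = 1" "L \<bullet> B = 0"
  shows "\<exists>\<alpha> \<beta>. w = \<alpha> *\<^sub>R U0 + \<beta> *\<^sub>R V0 + (w \<bullet> B) *\<^sub>R B + (w \<bullet> L) *\<^sub>R L"
proof -
  have sym: "V0 \<bullet> B = 0" "U0 \<bullet> B = 0" "U0 \<bullet> L = 0" "V0 \<bullet> L = 0" "B \<bullet> L = 0"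
    using B L by (simp_all add: inner_commute)
  have L0: "L \<notin> span {}" using L by auto
  have B1: "B \<notin> span {L}"
  proof
    assume "B \<in> span {L}" then obtain k where "B = k *\<^sub>R L" by (auto simp: span2_mem)
    then have "B \<bullet> B = k * (L \<bullet> B)" by (simp add: inner_commute)
    then show False using B L by simp
  qed
  have V1: "V0 \<notin> span {B, L}"
  proof
    assume "V0 \<in> span {B, L}"
    then obtain k where "V0 - k *\<^sub>R B \<in> span {L}" by (auto simp: span_insert)
    then obtain m where "V0 - k *\<^sub>R B = m *\<^sub>R L" by (auto simp: span2_mem)
    then have e: "V0 = k *\<^sub>R B + m *\<^sub>R L" by (simp add: algebra_simps)
    then have "V0 \<bullet> V0 = 0" using B L by (simp add: inner_add_left inner_commute)
    then have "V0 = 0" by simp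
    then show False using reg[rule_format, of 0 1] by simp
  qed
  have U1: "U0 \<notin> span {V0, B, L}"
  proof
    assume "U0 \<in> span {V0, B, L}"
    then obtain j where "U0 - j *\<^sub>R V0 \<in> span {B, L}" by (auto simp: span_insert)
    then obtain k where "U0 - j *\<^sub>R V0 - k *\<^sub>R B \<in> span {L}" by (auto simp: span_insert)
    then obtain m where "U0 - j *\<^sub>R V0 - k *\<^sub>R B = m *\<^sub>R L" by (auto simp: span2_mem)
    then have e: "U0 = j *\<^sub>R V0 + (k *\<^sub>R B + m *\<^sub>R L)" by (simp add: algebra_simps)
    have "(j *\<^sub>R V0 + (k *\<^sub>R B + m *\<^sub>R L)) \<bullet> B = k" using B L sym by (simp add: inner_add_left)
    moreover have "(j *\<^sub>R V0 + (k *\<^sub>R B + m *\<^sub>R L)) \<bullet> L = m" using B L sym by (simp add: inner_add_left)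
    ultimately have "k = 0" "m = 0" using sym e by simp_all
    then have "1 *\<^sub>R U0 + (-j) *\<^sub>R V0 = 0" using e by simp
    then show False using reg[rule_format, of 1 "-j"] by simp
  qed
  have ind: "independent {U0, V0, B, L}"
    by (intro independent_insertI[OF U1] independent_insertI[OF V1] independent_insertI[OF B1] independent_insertI[OF L0] independent_empty)
  have ne1: "U0 \<notin> {V0, B, L}" using U1 span_base by metis
  have ne2: "V0 \<notin> {B, L}" using V1 span_base by metis
  have ne3: "B \<notin> {L}" using B1 span_base by metis
  note ne = ne1 ne2 ne3
  have c: "card {U0, V0, B, L} = 4"
    using ne1 ne2 ne3 by (simp add: card_insert_if)
  have "UNIV \<subseteq> span {U0, V0, B, L}"
    by (rule card_ge_dim_independent[OF _ ind]) (simp_all add: c)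
  then have "w \<in> span {U0, V0, B, L}" by blast
  then obtain a where "w - a *\<^sub>R U0 \<in> span {V0, B, L}" by (auto simp: span_insert)
  then obtain b where "w - a *\<^sub>R U0 - b *\<^sub>R V0 \<in> span {B, L}" by (auto simp: span_insert)
  then obtain c where "w - a *\<^sub>R U0 - b *\<^sub>R V0 - c *\<^sub>R B \<in> span {L}" by (auto simp: span_insert)
  then obtain m where "w - a *\<^sub>R U0 - b *\<^sub>R V0 - c *\<^sub>R B = m *\<^sub>R L" by (auto simp: span2_mem)
  then have e: "w = a *\<^sub>R U0 + (b *\<^sub>R V0 + (c *\<^sub>R B + m *\<^sub>R L))" by (simp add: algebra_simps)
  have "w \<bullet> B = c" unfolding e using B L sym by (simp add: inner_add_left)
  moreover have "w \<bullet> L = m" unfolding e using B L sym by (simp add: inner_add_left)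
  ultimately show ?thesis using e by (auto simp: algebra_simps)
qed



lemma det4_diff4: "det4 a b c (x - y) = det4 a b c x - det4 a b c y"
  by (simp add: det4_def m3_def algebra_simps)

lemmas det4_lin = det4_add1 det4_add2 det4_add3 det4_add4 det4_scale1 det4_scale2 det4_scale3 det4_scale4 det4_diff4

definition cr :: "real^4 \<Rightarrow> real^4 \<Rightarrow> real^4 \<Rightarrow> real^4" where
  "cr a b c = (\<chi> i::4. if i = 1 then - m3 a b c 2 3 4 else if i = 2 then m3 a b c 1 3 4
      else if i = 3 then - m3 a b c 1 2 4 else m3 a b c 1 2 3)"

lemma det4_cr: "det4 a b c w = cr a b c \<bullet> w"
  unfolding cr_def det4_def m3_def inner_vec_def sum_4 by (simp add: algebra_simps)

lemma cr_gram: "cr a b c \<bullet> cr a b c = (a\<bullet>a)*((b\<bullet>b)*(c\<bullet>c) - (b\<bullet>c)^2) - (a\<bullet>b)*((a\<bullet>b)*(c\<bullet>c) - (b\<bullet>c)*(a\<bullet>c)) + (a\<bullet>c)*((a\<bullet>b)*(b\<bullet>c)-(b\<bullet>b)*(a\<bullet>c))"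
  unfolding cr_def inner_vec_def sum_4 m3_def power2_eq_square by simp algebra

lemma det4_nz:
  fixes U0 V0 B L :: "real^4"
  assumes reg: "\<forall>a c. a *\<^sub>R U0 + c *\<^sub>R V0 = 0 \<longrightarrow> a = 0 \<and> c = 0"
   and B: "B \<bullet> U0 = 0" "B \<bullet> V0 = 0" "B \<bullet> B = 1"
   and L: "L \<bullet> U0 = 0" "L \<bullet> V0 = 0" "L \<bullet> L = 1" "L \<bullet> B = 0"
   and d: "(U0\<bullet>U0)*(V0\<bullet>V0) - (U0\<bullet>V0)^2 > 0"
  shows "det4 U0 V0 L B \<noteq> 0"
proof
  assume z: "det4 U0 V0 L B = 0"
  have "det4 U0 V0 L w = 0" for w
  proof -
    obtain \<alpha> \<beta> where e: "w = \<alpha> *\<^sub>R U0 + \<beta> *\<^sub>R V0 + (w \<bullet> B) *\<^sub>R B + (w \<bullet> L) *\<^sub>R L"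
      using basis4[OF reg B L] by blast
    show ?thesis by (subst e) (simp add: det4_lin det4_alt z)
  qed
  then have "cr U0 V0 L \<bullet> cr U0 V0 L = 0" by (simp add: det4_cr[symmetric])
  moreover have "U0 \<bullet> L = 0" "V0 \<bullet> L = 0" using L by (simp_all add: inner_commute)
  ultimately show False using cr_gram[of U0 V0 L] d L by (simp add: power2_eq_square)
qed



lemma smooth_Du: "smooth_on U f \<Longrightarrow> smooth_on U (Du f)"
  unfolding smooth_on_def by (metis Ck.simps(2))
lemma smooth_Dv: "smooth_on U f \<Longrightarrow> smooth_on U (Dv f)"
  unfolding smooth_on_def by (metis Ck.simps(2))
lemma smooth_diff: "open U \<Longrightarrow> smooth_on U f \<Longrightarrow> q \<in> U \<Longrightarrow> f differentiable (at q)"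
  unfolding smooth_on_def by (metis Ck.simps(2) differentiable_on_eq_differentiable_at)

lemma zero_dir:
  assumes "open U" "p \<in> U" "\<forall>q\<in>U. D q = 0" "(D has_derivative D') (at p)"
  shows "D' w = 0"
proof -
  have "((\<lambda>q. 0) has_derivative D') (at p)"
    by (rule has_derivative_transform_within_open[OF assms(4) assms(1) assms(2)]) (use assms(3) in simp)
  moreover have "((\<lambda>q. 0) has_derivative (\<lambda>_. 0)) (at p)" by simp
  ultimately have "D' = (\<lambda>_. 0)" by (rule has_derivative_unique)
  then show ?thesis by simp
qed

lemma det_eq:
  fixes fa fb fc fd :: "real\<times>real \<Rightarrow> real^4"
  assumes "open U" "p \<in> U" "\<forall>q\<in>U. det4 (fa q) (fb q) (fc q) (fd q) = 0"
   and "fa differentiable (at p)" "fb differentiable (at p)" "fc differentiable (at p)" "fd differentiable (at p)"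
  shows "det4 (Du fa p) (fb p) (fc p) (fd p) + det4 (fa p) (Du fb p) (fc p) (fd p)
       + det4 (fa p) (fb p) (Du fc p) (fd p) + det4 (fa p) (fb p) (fc p) (Du fd p) = 0"
    and "det4 (Dv fa p) (fb p) (fc p) (fd p) + det4 (fa p) (Dv fb p) (fc p) (fd p)
       + det4 (fa p) (fb p) (Dv fc p) (fd p) + det4 (fa p) (fb p) (fc p) (Dv fd p) = 0"
proof -
  note h = det4_has_derivative[OF frechet_derivative_works[THEN iffD1, OF assms(4)]
      frechet_derivative_works[THEN iffD1, OF assms(5)] frechet_derivative_works[THEN iffD1, OF assms(6)]
      frechet_derivative_works[THEN iffD1, OF assms(7)]]
  show "det4 (Du fa p) (fb p) (fc p) (fd p) + det4 (fa p) (Du fb p) (fc p) (fd p)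
       + det4 (fa p) (fb p) (Du fc p) (fd p) + det4 (fa p) (fb p) (fc p) (Du fd p) = 0"
    using zero_dir[OF assms(1,2,3) h, of "(1,0)"] by (simp add: Du_def)
  show "det4 (Dv fa p) (fb p) (fc p) (fd p) + det4 (fa p) (Dv fb p) (fc p) (fd p)
       + det4 (fa p) (fb p) (Dv fc p) (fd p) + det4 (fa p) (fb p) (fc p) (Dv fd p) = 0"
    using zero_dir[OF assms(1,2,3) h, of "(0,1)"] by (simp add: Dv_def)
qed

lemma np_decomp: "\<exists>a c. w = normal_part z p w + a *\<^sub>R Du z p + c *\<^sub>R Dv z p"
proof -
  obtain a c where "normal_part z p w = w - (a *\<^sub>R Du z p + c *\<^sub>R Dv z p)"
    unfolding normal_part_def Let_def by blast
  then show ?thesis by (intro exI[of _ a] exI[of _ c]) simp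
qed

lemma det_np: "det4 (Du z p) (Dv z p) B w = det4 (Du z p) (Dv z p) B (normal_part z p w)"
  unfolding normal_part_def Let_def by (simp add: det4_lin det4_alt)



lemma regular_d:
  assumes "regular_at z p"
  shows "coefE z p * coefG z p - (coefF z p)^2 > 0"
proof -
  let ?u = "Du z p" and ?v = "Dv z p"
  have cs: "(?u \<bullet> ?v)^2 \<le> (?u \<bullet> ?u) * (?v \<bullet> ?v)"
    using Cauchy_Schwarz_ineq by blast
  have "(?u \<bullet> ?u) * (?v \<bullet> ?v) - (?u \<bullet> ?v)^2 \<noteq> 0"
  proof
    assume h: "(?u \<bullet> ?u) * (?v \<bullet> ?v) - (?u \<bullet> ?v)^2 = 0"
    have "((?v \<bullet> ?v) *\<^sub>R ?u - (?u \<bullet> ?v) *\<^sub>R ?v) \<bullet> ((?v \<bullet> ?v) *\<^sub>R ?u - (?u \<bullet> ?v) *\<^sub>R ?v)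
       = (?v \<bullet> ?v) * ((?u \<bullet> ?u) * (?v \<bullet> ?v) - (?u \<bullet> ?v)^2)"
      by (simp add: inner_diff_left inner_diff_right inner_commute power2_eq_square algebra_simps)
    then have "(?v \<bullet> ?v) *\<^sub>R ?u + (- (?u \<bullet> ?v)) *\<^sub>R ?v = 0" using h by simp
    then have "?v \<bullet> ?v = 0" using assms unfolding regular_at_def by blast
    then have "?v = 0" by simp
    then show False using assms unfolding regular_at_def by (metis add_0 scaleR_zero_left scaleR_zero_right zero_neq_one)
  qed
  then show ?thesis using cs unfolding coefE_def coefF_def coefG_def by linarith
qed

lemma part2:
  fixes z b :: "real\<times>real \<Rightarrow> real^4" and L :: "real^4"
  assumes U: "open U" and sz: "smooth_on U z" and reg: "\<forall>p\<in>U. regular_at z p" and sb: "smooth_on U b"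
   and hb: "\<forall>q\<in>U. is_normal z q (b q) \<and> b q \<bullet> b q = 1 \<and> sigma11 z q \<in> span {b q}
               \<and> sigma12 z q \<in> span {b q} \<and> sigma22 z q \<in> span {b q}"
   and p: "p \<in> U" and hl: "is_normal z p L" "L \<bullet> L = 1" "L \<bullet> b p = 0"
  shows "gauss_K z p = 0 \<or> (Du b p \<bullet> L = 0 \<and> Dv b p \<bullet> L = 0)"
proof -
  have sz1: "smooth_on U (Du z)" "smooth_on U (Dv z)" using sz smooth_Du smooth_Dv by auto
  have sz2: "smooth_on U (Du (Du z))" "smooth_on U (Dv (Du z))" "smooth_on U (Du (Dv z))" "smooth_on U (Dv (Dv z))"
    using sz1 smooth_Du smooth_Dv by auto
  have dif: "\<And>f q. smooth_on U f \<Longrightarrow> q \<in> U \<Longrightarrow> f differentiable (at q)"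
    using smooth_diff[OF U] by blast
  have S1: "\<forall>q\<in>U. Dv (Du z) q = Du (Dv z) q"
    using schwarz[OF U _ dif[OF sz]] dif sz1 by blast
  have S2: "Dv (Du (Du z)) p = Du (Dv (Du z)) p"
    using schwarz[OF U p dif[OF sz1(1)]] dif sz2 p by blast
  have S3: "Dv (Du (Dv z)) p = Du (Dv (Dv z)) p"
    using schwarz[OF U p dif[OF sz1(2)]] dif sz2 p by blast
  have zero: "det4 (Du z q) (Dv z q) (b q) w = 0" if q: "q \<in> U" and w: "normal_part z q w \<in> span {b q}" for q w
  proof -
    obtain h where "normal_part z q w = h *\<^sub>R b q" using w by (auto simp: span2_mem)
    then show ?thesis by (simp add: det_np[of z q] det4_lin det4_alt)
  qed
  have Z1: "\<forall>q\<in>U. det4 (Du z q) (Dv z q) (b q) (Du (Du z) q) = 0"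
    using zero hb by (auto simp: sigma11_def)
  have Z2: "\<forall>q\<in>U. det4 (Du z q) (Dv z q) (b q) (Dv (Du z) q) = 0"
    using zero hb by (auto simp: sigma12_def)
  have Z2': "\<forall>q\<in>U. det4 (Du z q) (Dv z q) (b q) (Du (Dv z) q) = 0"
    using Z2 S1 by simp
  have Z3: "\<forall>q\<in>U. det4 (Du z q) (Dv z q) (b q) (Dv (Dv z) q) = 0"
    using zero hb by (auto simp: sigma22_def)
  have dd: "Du z differentiable (at p)" "Dv z differentiable (at p)" "b differentiable (at p)"
    "Du (Du z) differentiable (at p)" "Dv (Du z) differentiable (at p)" "Du (Dv z) differentiable (at p)"
    "Dv (Dv z) differentiable (at p)"
    using dif[OF sz1(1) p] dif[OF sz1(2) p] dif[OF sb p] dif[OF sz2(1) p] dif[OF sz2(2) p]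
      dif[OF sz2(3) p] dif[OF sz2(4) p] by auto
  note E1 = det_eq(2)[OF U p Z1 dd(1,2,3,4)]
  note E2 = det_eq(1)[OF U p Z2 dd(1,2,3,5)]
  note E3 = det_eq(2)[OF U p Z2' dd(1,2,3,6)]
  note E4 = det_eq(1)[OF U p Z3 dd(1,2,3,7)]
  define U0 where "U0 = Du z p"
  define V0 where "V0 = Dv z p"
  define B where "B = b p"
  have regp: "\<forall>a c. a *\<^sub>R U0 + c *\<^sub>R V0 = 0 \<longrightarrow> a = 0 \<and> c = 0"
    using reg p by (simp add: regular_at_def U0_def V0_def)
  have Bf: "B \<bullet> U0 = 0" "B \<bullet> V0 = 0" "B \<bullet> B = 1"
    using hb p by (auto simp: B_def U0_def V0_def is_normal_def)
  have Lf: "L \<bullet> U0 = 0" "L \<bullet> V0 = 0" "L \<bullet> L = 1" "L \<bullet> B = 0"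
    using hl by (auto simp: B_def U0_def V0_def is_normal_def)
  have dpos: "(U0\<bullet>U0)*(V0\<bullet>V0) - (U0\<bullet>V0)^2 > 0"
    using regular_d[of z p] reg p by (simp add: U0_def V0_def coefE_def coefF_def coefG_def)
  have Dnz: "det4 U0 V0 L B \<noteq> 0" by (rule det4_nz[OF regp Bf Lf dpos])
  have sdec: "\<exists>x y h. w = x *\<^sub>R U0 + y *\<^sub>R V0 + h *\<^sub>R B \<and> normal_part z p w = h *\<^sub>R B"
    if sp: "normal_part z p w \<in> span {b p}" for w
  proof -
    obtain h where h: "normal_part z p w = h *\<^sub>R B" using sp unfolding B_def span2_mem by blast
    obtain a c where "w = normal_part z p w + a *\<^sub>R Du z p + c *\<^sub>R Dv z p" using np_decomp by blast
    then show ?thesis using h by (auto simp: U0_def V0_def algebra_simps)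
  qed
  obtain x1 y1 h11 where d11: "Du (Du z) p = x1 *\<^sub>R U0 + y1 *\<^sub>R V0 + h11 *\<^sub>R B" "sigma11 z p = h11 *\<^sub>R B"
    using sdec[of "Du (Du z) p"] hb p by (auto simp: sigma11_def)
  obtain x2 y2 h12 where d12: "Dv (Du z) p = x2 *\<^sub>R U0 + y2 *\<^sub>R V0 + h12 *\<^sub>R B" "sigma12 z p = h12 *\<^sub>R B"
    using sdec[of "Dv (Du z) p"] hb p by (auto simp: sigma12_def)
  obtain x3 y3 h22 where d22: "Dv (Dv z) p = x3 *\<^sub>R U0 + y3 *\<^sub>R V0 + h22 *\<^sub>R B" "sigma22 z p = h22 *\<^sub>R B"
    using sdec[of "Dv (Dv z) p"] hb p by (auto simp: sigma22_def)
  have d21: "Du (Dv z) p = x2 *\<^sub>R U0 + y2 *\<^sub>R V0 + h12 *\<^sub>R B" using S1 p d12 by metis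
  define mu where "mu = Du b p \<bullet> L"
  define mv where "mv = Dv b p \<bullet> L"
  obtain r1 s1 where dbu: "Du b p = r1 *\<^sub>R U0 + s1 *\<^sub>R V0 + (Du b p \<bullet> B) *\<^sub>R B + mu *\<^sub>R L"
    using basis4[OF regp Bf Lf] mu_def by blast
  obtain r2 s2 where dbv: "Dv b p = r2 *\<^sub>R U0 + s2 *\<^sub>R V0 + (Dv b p \<bullet> B) *\<^sub>R B + mv *\<^sub>R L"
    using basis4[OF regp Bf Lf] mv_def by blast
  define tu where "tu = Du b p \<bullet> B"
  define tv where "tv = Dv b p \<bullet> B"
  have dbu': "Du b p = r1 *\<^sub>R U0 + s1 *\<^sub>R V0 + tu *\<^sub>R B + mu *\<^sub>R L" using dbu tu_def by simp
  have dbv': "Dv b p = r2 *\<^sub>R U0 + s2 *\<^sub>R V0 + tv *\<^sub>R B + mv *\<^sub>R L" using dbv tv_def by simp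
  have F1: "det4 U0 V0 (Dv b p) (Du (Du z) p) + det4 (Dv (Du z) p) V0 B (Du (Du z) p) + det4 U0 (Dv (Dv z) p) B (Du (Du z) p)
     = det4 U0 V0 (Du b p) (Dv (Du z) p) + det4 (Du (Du z) p) V0 B (Dv (Du z) p) + det4 U0 (Du (Dv z) p) B (Dv (Du z) p)"
    using E1 E2 S2 unfolding U0_def V0_def B_def by simp
  have F2: "det4 U0 V0 (Dv b p) (Du (Dv z) p) + det4 (Dv (Du z) p) V0 B (Du (Dv z) p) + det4 U0 (Dv (Dv z) p) B (Du (Dv z) p)
     = det4 U0 V0 (Du b p) (Dv (Dv z) p) + det4 (Du (Du z) p) V0 B (Dv (Dv z) p) + det4 U0 (Du (Dv z) p) B (Dv (Dv z) p)"
    using E3 E4 S3 unfolding U0_def V0_def B_def by simp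
  have G1: "(mv * h11 - mu * h12) * det4 U0 V0 L B = 0"
    using F1 unfolding dbu' dbv' d11(1) d12(1) d21 d22(1) by (simp add: det4_lin det4_alt algebra_simps)
  have G2: "(mv * h12 - mu * h22) * det4 U0 V0 L B = 0"
    using F2 unfolding dbu' dbv' d11(1) d12(1) d21 d22(1) by (simp add: det4_lin det4_alt algebra_simps)
  have H1: "mv * h11 = mu * h12" "mv * h12 = mu * h22" using G1 G2 Dnz by auto
  have K: "gauss_K z p = (h11 * h22 - h12 * h12) / (coefE z p * coefG z p - (coefF z p)^2)"
    unfolding gauss_K_def d11(2) d12(2) d22(2) using Bf by simp
  show ?thesis
  proof (cases "h11 * h22 - h12 * h12 = 0")
    case True then show ?thesis using K by simp
  next
    case False
    have "(h11 * h22 - h12 * h12) * mv = h22 * (mv * h11) - h12 * (mv * h12)" by (simp add: algebra_simps)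
    also have "\<dots> = h22 * (mu * h12) - h12 * (mu * h22)" using H1 by simp
    also have "\<dots> = 0" by simp
    finally have m1: "(h11 * h22 - h12 * h12) * mv = 0" .
    have "(h11 * h22 - h12 * h12) * mu = h11 * (mu * h22) - h12 * (mu * h12)" by (simp add: algebra_simps)
    also have "\<dots> = h11 * (mv * h12) - h12 * (mv * h11)" using H1 by simp
    also have "\<dots> = 0" by simp
    finally have m2: "(h11 * h22 - h12 * h12) * mu = 0" .
    from m1 m2 show ?thesis using False by (simp add: mu_def mv_def)
  qed
qed



lemma par2:
  fixes e1 e2 :: "real^4"
  assumes v: "v = a *\<^sub>R e1 + b *\<^sub>R e2" "v \<noteq> 0" and w: "w = c *\<^sub>R e1 + d *\<^sub>R e2" and det: "a * d - b * c = 0"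
  shows "w \<in> span {v}"
proof -
  have ab: "a*a + b*b \<noteq> 0" using v by auto
  define t where "t = (a*c + b*d) / (a*a + b*b)"
  have ad: "a*d = b*c" using det by simp
  have n1: "a*a*c + a*b*d = c*(a*a+b*b)"
  proof -
    have "a*b*d = b*(a*d)" by simp
    also have "\<dots> = b*(b*c)" using ad by simp
    finally show ?thesis by (simp add: algebra_simps)
  qed
  have n2: "a*b*c + b*b*d = d*(a*a+b*b)"
  proof -
    have "a*b*c = a*(b*c)" by simp
    also have "\<dots> = a*(a*d)" using ad by simp
    finally show ?thesis by (simp add: algebra_simps)
  qed
  have "t*a = (a*a*c + a*b*d)/(a*a+b*b)" unfolding t_def by (simp add: field_simps)
  also have "\<dots> = c" using n1 ab by simp
  finally have ta: "t*a = c" .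
  have "t*b = (a*b*c + b*b*d)/(a*a+b*b)" unfolding t_def by (simp add: field_simps)
  also have "\<dots> = d" using n2 ab by simp
  finally have tb: "t*b = d" .
  from ta tb have "w = t *\<^sub>R v" using v w by (simp add: algebra_simps)
  then show ?thesis by (auto simp: span2_mem)
qed

lemma dim_one:
  fixes e1 e2 s1 s2 s3 :: "real^4"
  assumes s: "s1 = x1 *\<^sub>R e1 + y1 *\<^sub>R e2" "s2 = x2 *\<^sub>R e1 + y2 *\<^sub>R e2" "s3 = x3 *\<^sub>R e1 + y3 *\<^sub>R e2"
   and d: "x1*y2 - y1*x2 = 0" "x1*y3 - y1*x3 = 0" "x2*y3 - y2*x3 = 0"
   and nz: "\<not> (s1 = 0 \<and> s2 = 0 \<and> s3 = 0)"
  shows "dim {s1, s2, s3} = 1"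
proof -
  obtain v where v: "v \<in> {s1, s2, s3}" "v \<noteq> 0" "{s1, s2, s3} \<subseteq> span {v}"
  proof (cases "s1 = 0")
    case False
    have "s2 \<in> span {s1}" by (rule par2[OF s(1) False s(2)]) (use d in \<open>simp add: algebra_simps\<close>)
    moreover have "s3 \<in> span {s1}" by (rule par2[OF s(1) False s(3)]) (use d in \<open>simp add: algebra_simps\<close>)
    ultimately show ?thesis using that[of s1] False by (auto intro: span_base)
  next
    case s1: True
    show ?thesis
    proof (cases "s2 = 0")
      case False
      have "s3 \<in> span {s2}" by (rule par2[OF s(2) False s(3)]) (use d in \<open>simp add: algebra_simps\<close>)
      then show ?thesis using that[of s2] False s1 by (auto intro: span_base span_zero)
    next
      case True
      then have "s3 \<noteq> 0" using s1 nz by auto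
      then show ?thesis using that[of s3] True s1 by (auto intro: span_base span_zero)
    qed
  qed
  have "dim {s1, s2, s3} \<le> dim (span {v})" by (rule dim_subset[OF v(3)])
  also have "\<dots> = 1" using v(2) by (simp add: dim_span)
  finally have le: "dim {s1, s2, s3} \<le> 1" .
  have "dim {v} \<le> dim {s1, s2, s3}" by (rule dim_subset) (use v(1) in auto)
  then show ?thesis using le v(2) by simp
qed

lemma np_normal:
  assumes d: "coefE z p * coefG z p - (coefF z p)^2 \<noteq> 0"
  shows "normal_part z p w \<bullet> Du z p = 0" "normal_part z p w \<bullet> Dv z p = 0"
proof -
  let ?E = "coefE z p" and ?F = "coefF z p" and ?G = "coefG z p"
  have e: "Du z p \<bullet> Du z p = ?E" "Du z p \<bullet> Dv z p = ?F" "Dv z p \<bullet> Dv z p = ?G" "Dv z p \<bullet> Du z p = ?F"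
    by (simp_all add: coefE_def coefF_def coefG_def inner_commute)
  define wu where "wu = w \<bullet> Du z p"
  define wv where "wv = w \<bullet> Dv z p"
  define dd where "dd = ?E * ?G - ?F^2"
  have dd: "dd \<noteq> 0" using d dd_def by simp
  have np: "normal_part z p w = w - (((?G*wu - ?F*wv)/dd) *\<^sub>R Du z p + ((?E*wv - ?F*wu)/dd) *\<^sub>R Dv z p)"
    unfolding normal_part_def Let_def wu_def wv_def dd_def by simp
  have r1: "((?G*wu - ?F*wv)/dd) * ?E + ((?E*wv - ?F*wu)/dd) * ?F = wu"
    using dd by (simp add: field_simps) (simp add: dd_def algebra_simps power2_eq_square)
  have r2: "((?G*wu - ?F*wv)/dd) * ?F + ((?E*wv - ?F*wu)/dd) * ?G = wv"
    using dd by (simp add: field_simps) (simp add: dd_def algebra_simps power2_eq_square)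
  show "normal_part z p w \<bullet> Du z p = 0"
    unfolding np using r1 by (simp add: inner_diff_left inner_add_left e wu_def[symmetric])
  show "normal_part z p w \<bullet> Dv z p = 0"
    unfolding np using r2 by (simp add: inner_diff_left inner_add_left e wv_def[symmetric])
qed

lemma flat_LMN:
  fixes E F G L M N :: real
  assumes E: "E > 0" and G: "G > 0" and d: "E*G - F^2 > 0"
   and k: "L*N - M^2 = 0" and ka: "E*N + G*L - 2*F*M = 0"
  shows "L = 0 \<and> M = 0 \<and> N = 0"
proof -
  have M2: "M^2 = L*N" using k by simp
  have s: "E*N + G*L = 2*F*M" using ka by simp
  have sq: "(E*N + G*L)^2 = 4*F^2*(L*N)" unfolding s M2[symmetric] by (simp add: power_mult_distrib)
  have "(E*N + G*L)^2 - 4*E*G*(L*N) = (E*N - G*L)^2" by (simp add: power2_eq_square algebra_simps)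
  then have "(E*N + G*L)^2 - 4*E*G*(L*N) \<ge> 0" by simp
  then have "(L*N) * (E*G - F^2) \<le> 0" using sq by (simp add: algebra_simps)
  then have "L*N \<le> 0" using d by (simp add: mult_le_0_iff)
  moreover have "L*N \<ge> 0" using M2 by (metis zero_le_power2)
  ultimately have LN: "L*N = 0" by simp
  have "M^2 = 0" using M2 LN by simp
  then have M: "M = 0" by simp
  have "E*N + G*L = 0" using s M by simp
  then show ?thesis using LN M E G by (auto simp: mult_eq_0_iff)
qed



lemma span2_coords:
  fixes e1 e2 w :: "real^4"
  assumes "w \<in> span {e1, e2}" "e1 \<bullet> e1 = 1" "e2 \<bullet> e2 = 1" "e1 \<bullet> e2 = 0"
  shows "w = (w \<bullet> e1) *\<^sub>R e1 + (w \<bullet> e2) *\<^sub>R e2"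
proof -
  obtain a where "w - a *\<^sub>R e1 \<in> span {e2}" using assms(1) by (auto simp: span_insert)
  then obtain c where "w - a *\<^sub>R e1 = c *\<^sub>R e2" by (auto simp: span2_mem)
  then have e: "w = a *\<^sub>R e1 + c *\<^sub>R e2" by (simp add: algebra_simps)
  have s: "e2 \<bullet> e1 = 0" using assms(4) by (simp add: inner_commute)
  have "w \<bullet> e1 = a" unfolding e using assms s by (simp add: inner_add_left)
  moreover have "w \<bullet> e2 = c" unfolding e using assms s by (simp add: inner_add_left)
  ultimately show ?thesis using e by simp
qed

lemma part1:
  assumes reg: "regular_at z p" and fl: "flat_point z p"
    and nz: "\<not> (sigma11 z p = 0 \<and> sigma12 z p = 0 \<and> sigma22 z p = 0)"
  shows "dim {sigma11 z p, sigma12 z p, sigma22 z p} = 1"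
proof -
  define U0 where "U0 = Du z p"
  define V0 where "V0 = Dv z p"
  let ?E = "coefE z p" and ?F = "coefF z p" and ?G = "coefG z p"
  have d: "?E * ?G - ?F^2 > 0" using regular_d[OF reg] .
  have E0: "?E \<ge> 0" "?G \<ge> 0" by (simp_all add: coefE_def coefG_def)
  have "?E * ?G > 0" using d by (smt (verit) zero_le_power2)
  then have EG: "?E > 0" "?G > 0" using E0 by (auto simp: zero_less_mult_iff)
  have regp: "\<forall>a c. a *\<^sub>R U0 + c *\<^sub>R V0 = 0 \<longrightarrow> a = 0 \<and> c = 0"
    using reg by (simp add: regular_at_def U0_def V0_def)
  define S where "S = {w. w \<bullet> U0 = 0 \<and> w \<bullet> V0 = 0}"
  have subS: "subspace S" unfolding subspace_def S_def by (auto simp: inner_add_left)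
  have eqS: "{y \<in> UNIV. \<forall>x \<in> span {U0, V0}. orthogonal x y} = S"
  proof
    show "{y \<in> UNIV. \<forall>x \<in> span {U0, V0}. orthogonal x y} \<subseteq> S"
      unfolding S_def orthogonal_def by (auto intro: span_base simp: inner_commute)
    show "S \<subseteq> {y \<in> UNIV. \<forall>x \<in> span {U0, V0}. orthogonal x y}"
    proof (clarsimp)
      fix y x assume y: "y \<in> S" and x: "x \<in> span {U0, V0}"
      obtain a where "x - a *\<^sub>R U0 \<in> span {V0}" using x by (auto simp: span_insert)
      then obtain c where "x - a *\<^sub>R U0 = c *\<^sub>R V0" by (auto simp: span2_mem)
      then have "x = a *\<^sub>R U0 + c *\<^sub>R V0" by (simp add: algebra_simps)
      then show "orthogonal x y" using y unfolding S_def orthogonal_def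
        by (simp add: inner_add_left inner_add_right inner_commute[of U0] inner_commute[of V0])
    qed
  qed
  have V0n: "V0 \<noteq> 0" using regp by (metis add_0 scaleR_zero_left scaleR_zero_right zero_neq_one)
  have U1: "U0 \<notin> span {V0}"
  proof
    assume "U0 \<in> span {V0}" then obtain k where "U0 = k *\<^sub>R V0" by (auto simp: span2_mem)
    then have "1 *\<^sub>R U0 + (-k) *\<^sub>R V0 = 0" by simp
    then show False using regp[rule_format, of 1 "-k"] by simp
  qed
  have indUV: "independent {U0, V0}"
    by (intro independent_insertI[OF U1] independent_insertI independent_empty) (use V0n in simp)
  have neUV: "U0 \<noteq> V0" using U1 span_base by (metis singletonI)
  have dimUV: "dim (span {U0, V0}) = 2"
    using dim_eq_card_independent[OF indUV] neUV by (simp add: dim_span)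
  have "dim {y \<in> UNIV. \<forall>x \<in> span {U0, V0}. orthogonal x y} + dim (span {U0, V0}) = dim (UNIV :: (real^4) set)"
    by (rule dim_subspace_orthogonal_to_vectors) auto
  then have dimS: "dim S = 2" using eqS dimUV by simp
  obtain Bs where Bs: "Bs \<subseteq> S" "pairwise orthogonal Bs" "\<And>x. x \<in> Bs \<Longrightarrow> norm x = 1"
    "independent Bs" "card Bs = dim S" "span Bs = S"
    using orthonormal_basis_subspace[OF subS] by blast
  obtain e1 e2 where e12: "Bs = {e1, e2}" "e1 \<noteq> e2" using Bs(5) dimS by (auto simp: card_2_iff)
  have n1: "e1 \<bullet> e1 = 1" "e2 \<bullet> e2 = 1"
    using Bs(3) e12 by (auto simp: power2_norm_eq_inner[symmetric])
  have o12: "e1 \<bullet> e2 = 0" using Bs(2) e12 by (auto simp: pairwise_def orthogonal_def)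
  have eS: "e1 \<in> S" "e2 \<in> S" using Bs(1) e12 by auto
  have frame: "orthonormal_normal_frame z p e1 e2"
    using eS n1 o12 by (simp add: orthonormal_normal_frame_def is_normal_def S_def U0_def V0_def)
  have kk: "inv_k z p e1 e2 = 0" "inv_kappa z p e1 e2 = 0" using fl frame by (auto simp: flat_point_def)
  have dne: "?E * ?G - ?F^2 \<noteq> 0" using d by simp
  have inS: "normal_part z p w \<in> S" for w
    using np_normal[OF dne] by (simp add: S_def U0_def V0_def)
  have inspan: "normal_part z p w \<in> span {e1, e2}" for w using inS Bs(6) e12 by simp
  have co: "normal_part z p w = (normal_part z p w \<bullet> e1) *\<^sub>R e1 + (normal_part z p w \<bullet> e2) *\<^sub>R e2" for w
    by (rule span2_coords[OF inspan n1 o12])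
  define W where "W = coefW z p"
  have W: "W > 0" using d by (simp add: W_def coefW_def)
  define LL where "LL = invL z p e1 e2"
  define MM where "MM = invM z p e1 e2"
  define NN where "NN = invN z p e1 e2"
  have "LL * NN - MM^2 = 0" using kk(1) dne by (simp add: inv_k_def LL_def MM_def NN_def)
  moreover have "?E * NN + ?G * LL - 2 * ?F * MM = 0" using kk(2) dne by (simp add: inv_kappa_def LL_def MM_def NN_def)
  ultimately have LMN: "LL = 0 \<and> MM = 0 \<and> NN = 0" using flat_LMN[OF EG d] by blast
  have D1: "(sigma11 z p \<bullet> e1) * (sigma12 z p \<bullet> e2) - (sigma11 z p \<bullet> e2) * (sigma12 z p \<bullet> e1) = 0"
    using LMN W by (simp add: LL_def invL_def W_def)
  have D2: "(sigma11 z p \<bullet> e1) * (sigma22 z p \<bullet> e2) - (sigma11 z p \<bullet> e2) * (sigma22 z p \<bullet> e1) = 0"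
    using LMN W by (simp add: MM_def invM_def W_def)
  have D3: "(sigma12 z p \<bullet> e1) * (sigma22 z p \<bullet> e2) - (sigma12 z p \<bullet> e2) * (sigma22 z p \<bullet> e1) = 0"
    using LMN W by (simp add: NN_def invN_def W_def)
  show ?thesis
    by (rule dim_one[OF co[of "Du (Du z) p", folded sigma11_def] co[of "Dv (Du z) p", folded sigma12_def]
        co[of "Dv (Dv z) p", folded sigma22_def] _ _ _ nz])
       (use D1 D2 D3 in \<open>simp_all add: algebra_simps\<close>)
qed


theorem mainTheorem4:
  fixes z :: "real \<times> real \<Rightarrow> real^4" and U :: "(real \<times> real) set"
  assumes "open U"
    and "smooth_on U z"
    and "\<forall>p\<in>U. regular_at z p"
    and "\<forall>p\<in>U. flat_point z p"
    and "\<forall>p\<in>U. \<not> (sigma11 z p = 0 \<and> sigma12 z p = 0 \<and> sigma22 z p = 0)"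
  shows "(\<forall>p\<in>U. dim {sigma11 z p, sigma12 z p, sigma22 z p} = 1)
    \<and> (\<forall>b l :: real \<times> real \<Rightarrow> real^4.
         smooth_on U b
         \<and> (\<forall>p\<in>U. is_normal z p (b p) \<and> b p \<bullet> b p = 1
               \<and> sigma11 z p \<in> span {b p} \<and> sigma12 z p \<in> span {b p}
               \<and> sigma22 z p \<in> span {b p})
         \<and> (\<forall>p\<in>U. is_normal z p (l p) \<and> l p \<bullet> l p = 1 \<and> l p \<bullet> b p = 0)
       \<longrightarrow> (\<forall>p\<in>U. \<forall>a1 a2 c1 c2.
              (let x = a1 *\<^sub>R Du z p + a2 *\<^sub>R Dv z p;
                   y = c1 *\<^sub>R Du z p + c2 *\<^sub>R Dv z p
               in x \<bullet> x = 1 \<and> y \<bullet> y = 1 \<and> x \<bullet> y = 0)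
              \<longrightarrow> (let beta1 = nabla' b p a1 a2 \<bullet> l p;
                       beta2 = nabla' b p c1 c2 \<bullet> l p
                   in gauss_K z p = 0 \<or> beta1^2 + beta2^2 = 0)))"
proof -
  have P1: "\<forall>p\<in>U. dim {sigma11 z p, sigma12 z p, sigma22 z p} = 1"
    using part1 assms(3,4,5) by blast
  have P2: "\<forall>b l :: real \<times> real \<Rightarrow> real^4.
         smooth_on U b
         \<and> (\<forall>p\<in>U. is_normal z p (b p) \<and> b p \<bullet> b p = 1
               \<and> sigma11 z p \<in> span {b p} \<and> sigma12 z p \<in> span {b p}
               \<and> sigma22 z p \<in> span {b p})
         \<and> (\<forall>p\<in>U. is_normal z p (l p) \<and> l p \<bullet> l p = 1 \<and> l p \<bullet> b p = 0)
       \<longrightarrow> (\<forall>p\<in>U. \<forall>a1 a2 c1 c2.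
              (let x = a1 *\<^sub>R Du z p + a2 *\<^sub>R Dv z p;
                   y = c1 *\<^sub>R Du z p + c2 *\<^sub>R Dv z p
               in x \<bullet> x = 1 \<and> y \<bullet> y = 1 \<and> x \<bullet> y = 0)
              \<longrightarrow> (let beta1 = nabla' b p a1 a2 \<bullet> l p;
                       beta2 = nabla' b p c1 c2 \<bullet> l p
                   in gauss_K z p = 0 \<or> beta1^2 + beta2^2 = 0))"
  proof (intro allI impI ballI)
    fix b l :: "real \<times> real \<Rightarrow> real^4" and p a1 a2 c1 c2
    assume H: "smooth_on U b
         \<and> (\<forall>p\<in>U. is_normal z p (b p) \<and> b p \<bullet> b p = 1
               \<and> sigma11 z p \<in> span {b p} \<and> sigma12 z p \<in> span {b p}
               \<and> sigma22 z p \<in> span {b p})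
         \<and> (\<forall>p\<in>U. is_normal z p (l p) \<and> l p \<bullet> l p = 1 \<and> l p \<bullet> b p = 0)"
      and p: "p \<in> U"
    have hl: "is_normal z p (l p)" "l p \<bullet> l p = 1" "l p \<bullet> b p = 0" using H p by auto
    have "gauss_K z p = 0 \<or> (Du b p \<bullet> l p = 0 \<and> Dv b p \<bullet> l p = 0)"
    proof (rule part2[where b=b, OF assms(1,2,3)])
      show "smooth_on U b" using H by blast
      show "\<forall>q\<in>U. is_normal z q (b q) \<and> b q \<bullet> b q = 1 \<and> sigma11 z q \<in> span {b q}
               \<and> sigma12 z q \<in> span {b q} \<and> sigma22 z q \<in> span {b q}" using H by blast
    qed (use p hl in auto)
    then show "let beta1 = nabla' b p a1 a2 \<bullet> l p;
                       beta2 = nabla' b p c1 c2 \<bullet> l p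
                   in gauss_K z p = 0 \<or> beta1^2 + beta2^2 = 0"
      by (auto simp: Let_def nabla'_def inner_add_left)
  qed
  show ?thesis using P1 P2 by blast
qed

end
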